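(* Let $n\geq 3$ and let $A$ be an $F_n$-good $n\times n$ matrix. If row $i$ of $A$ has two entries equal to $1$, in columns $j$ and $k$ with $j<k$, then $k=j+2$ and $i\in\{1,n\}$.
   Context: $F_n$ is the set of vectors $\vec{x}=(x_1,\ldots,x_n)\in\mathbb{Z}_2^n$ with no $i$ such that $x_i=x_{i+1}=1$. An $n\times n$ matrix $A$ over $\mathbb{Z}_2$ is $F_n$-good if it is invertible and $A\vec{x}\in F_n$ for all $\vec{x}\in F_n$. *)

theory Defs
  imports "HOL-Library.Z2" "Jordan_Normal_Form.Matrix"
begin

text \<open>Indices are 0-based (Jordan_Normal_Form convention): paper index t corresponds to t-1.\<close>

definition F_set :: "nat \<Rightarrow> bit vec set" where
  "F_set n = {x \<in> carrier_vec n. \<not> (\<exists>i. Suc i < n \<and> x $ i = 1 \<and> x $ Suc i = 1)}"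

definition F_good :: "nat \<Rightarrow> bit mat \<Rightarrow> bool" where
  "F_good n A \<longleftrightarrow> A \<in> carrier_mat n n \<and> invertible_mat A \<and> (\<forall>x \<in> F_set n. A *\<^sub>v x \<in> F_set n)"

end

theory Submission
  imports Defs
begin

lemma bit_cases': "(x::bit) = 0 \<or> x = 1"
  by (cases x) auto

lemma unit_in_F: "t < n \<Longrightarrow> unit_vec n t \<in> F_set n"
  unfolding F_set_def by auto

lemma pair_in_F: "t < n \<Longrightarrow> s < n \<Longrightarrow> t + 2 \<le> s \<or> s + 2 \<le> t \<Longrightarrow>
   unit_vec n t + unit_vec n s \<in> F_set n"
  unfolding F_set_def by (auto simp: unit_vec_def)

lemma Av_unit: "(A::bit mat) \<in> carrier_mat n n \<Longrightarrow> r < n \<Longrightarrow> t < n \<Longrightarrow> (A *\<^sub>v unit_vec n t) $ r = A $$ (r,t)"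
proof -
  assume a: "A \<in> carrier_mat n n" "r < n" "t < n"
  have "(A *\<^sub>v unit_vec n t) $ r = row A r \<bullet> unit_vec n t" using a by (simp only: index_mult_mat_vec carrier_matD)
  also have "\<dots> = row A r $ t" by (rule scalar_prod_right_unit[OF a(3)])
  also have "\<dots> = A $$ (r,t)" using a by simp
  finally show ?thesis .
qed

lemma Av_pair: "(A::bit mat) \<in> carrier_mat n n \<Longrightarrow> r < n \<Longrightarrow> t < n \<Longrightarrow> s < n \<Longrightarrow>
   (A *\<^sub>v (unit_vec n t + unit_vec n s)) $ r = A $$ (r,t) + A $$ (r,s)"
proof -
  assume a: "A \<in> carrier_mat n n" "r < n" "t < n" "s < n"
  have "(A *\<^sub>v (unit_vec n t + unit_vec n s)) $ r = (A *\<^sub>v unit_vec n t) $ r + (A *\<^sub>v unit_vec n s) $ r"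
    using a by (simp add: mult_add_distrib_mat_vec[of A n n])
  thus ?thesis using Av_unit[OF a(1,2,3)] Av_unit[OF a(1,2,4)] by simp
qed

lemma adj:
  assumes "F_good n A" "x \<in> F_set n" "p < n" "q < n" "q = Suc p \<or> p = Suc q"
  shows "\<not> ((A *\<^sub>v x) $ p = 1 \<and> (A *\<^sub>v x) $ q = 1)"
proof -
  have "A *\<^sub>v x \<in> F_set n" using assms(1,2) unfolding F_good_def by auto
  thus ?thesis using assms(3-5) unfolding F_set_def by auto
qed

lemma key:
  assumes G: "F_good n A" and pq: "p < n" "q < n" "q = Suc p \<or> p = Suc q"
    and jk: "j < k" "k < n" and a: "A $$ (p,j) = 1" "A $$ (p,k) = 1"
    and t: "t < n" "A $$ (q,t) = 1"
  shows "t = j + 1 \<and> k = j + 2"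
proof -
  have C: "A \<in> carrier_mat n n" using G unfolding F_good_def by auto
  have j: "j < n" using jk by auto
  have "t \<noteq> j"
  proof
    assume "t = j"
    thus False using adj[OF G unit_in_F[OF j] pq] Av_unit[OF C _ j] pq a t by auto
  qed
  moreover have "t \<noteq> k"
  proof
    assume "t = k"
    thus False using adj[OF G unit_in_F[OF jk(2)] pq] Av_unit[OF C _ jk(2)] pq a t by auto
  qed
  moreover have pt: "A $$ (p,t) = 0"
  proof (rule ccontr)
    assume "A $$ (p,t) \<noteq> 0"
    hence "A $$ (p,t) = 1" using bit_cases' by auto
    thus False using adj[OF G unit_in_F[OF t(1)] pq] Av_unit[OF C _ t(1)] pq t by auto
  qed
  moreover have qj: "A $$ (q,j) = 0"
    using adj[OF G unit_in_F[OF j] pq] Av_unit[OF C _ j] pq a bit_cases' by metis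
  moreover have qk: "A $$ (q,k) = 0"
    using adj[OF G unit_in_F[OF jk(2)] pq] Av_unit[OF C _ jk(2)] pq a bit_cases' by metis
  moreover have "\<not> (t + 2 \<le> j \<or> j + 2 \<le> t)"
  proof
    assume h: "t + 2 \<le> j \<or> j + 2 \<le> t"
    show False using adj[OF G pair_in_F[OF t(1) j h] pq] Av_pair[OF C _ t(1) j] pq a t pt qj by auto
  qed
  moreover have "\<not> (t + 2 \<le> k \<or> k + 2 \<le> t)"
  proof
    assume h: "t + 2 \<le> k \<or> k + 2 \<le> t"
    show False using adj[OF G pair_in_F[OF t(1) jk(2) h] pq] Av_pair[OF C _ t(1) jk(2)] pq a t pt qk by auto
  qed
  ultimately show ?thesis using jk by linarith
qed

lemma row_nonzero:
  assumes G: "F_good n A" and q: "q < n"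
  shows "\<exists>t<n. A $$ (q,t) = 1"
proof (rule ccontr)
  assume "\<not> ?thesis"
  hence z: "\<And>t. t < n \<Longrightarrow> A $$ (q,t) = 0" using bit_cases' by blast
  have C: "A \<in> carrier_mat n n" using G unfolding F_good_def by auto
  obtain B where B: "A * B = 1\<^sub>m n" "B * A = 1\<^sub>m (dim_row B)"
    using G C unfolding F_good_def invertible_mat_def inverts_mat_def by auto
  have "dim_col (A * B) = n" using B(1) by simp
  hence dB: "dim_col B = n" by simp
  have dBr: "dim_row B = n" using B(2) C
    by (metis carrier_matD(2) index_mult_mat(2) index_mult_mat(3) index_one_mat(3))
  have "(A * B) $$ (q,q) = row A q \<bullet> col B q" using q C dB by auto
  also have "row A q = 0\<^sub>v n" using C q z by (intro eq_vecI) auto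
  also have "0\<^sub>v n \<bullet> col B q = 0" using dBr by (intro scalar_prod_left_zero) auto
  finally show False using B(1) q by simp
qed

lemma rows_distinct:
  assumes G: "F_good n A" and r: "r1 < n" "r2 < n" "r1 \<noteq> r2"
    and eq: "\<And>t. t < n \<Longrightarrow> A $$ (r1,t) = A $$ (r2,t)"
  shows False
proof -
  have C: "A \<in> carrier_mat n n" using G unfolding F_good_def by auto
  obtain B where B: "A * B = 1\<^sub>m n"
    using G C unfolding F_good_def invertible_mat_def inverts_mat_def by auto
  have "dim_col (A * B) = n" using B(1) by simp
  hence dB: "dim_col B = n" by simp
  have rr: "row A r1 = row A r2" using C r eq by (intro eq_vecI) auto
  have "(A * B) $$ (r1,r1) = row A r1 \<bullet> col B r1" using r C dB by auto
  also have "\<dots> = (A * B) $$ (r2,r1)" using r C dB rr by auto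
  finally show False using B r by simp
qed

theorem lemma2:
  fixes n :: nat and A :: "bit mat" and i j k :: nat
  assumes "n \<ge> 3" and "F_good n A"
    and "i < n" and "j < k" and "k < n"
    and "A $$ (i, j) = 1" and "A $$ (i, k) = 1"
  shows "k = j + 2 \<and> (i = 0 \<or> i = n - 1)"
proof -
  note G = assms(2)
  have K: "k = j + 2"
  proof (cases "i = 0")
    case True
    then obtain t where "t < n" "A $$ (1,t) = 1" using row_nonzero[OF G, of 1] assms(1) by auto
    thus ?thesis using key[OF G, of i 1 j k t] assms True by auto
  next
    case False
    have "i - 1 < n" using assms(3) by arith
    then obtain t where "t < n" "A $$ (i-1,t) = 1" using row_nonzero[OF G, of "i-1"] by auto
    thus ?thesis using key[OF G, of i "i-1" j k t] assms False by auto
  qed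
  moreover have "i = 0 \<or> i = n - 1"
  proof (rule ccontr)
    assume h: "\<not> (i = 0 \<or> i = n - 1)"
    have lo: "\<And>t. t < n \<Longrightarrow> A $$ (i-1,t) = (if t = j + 1 then 1 else 0)"
    proof -
      fix t assume t: "t < n"
      have "i - 1 < n" using assms(3) by arith
      then obtain t0 where "t0 < n" "A $$ (i-1,t0) = 1" using row_nonzero[OF G, of "i-1"] by auto
      hence "t0 = j + 1" using key[OF G, of i "i-1" j k t0] assms h by auto
      moreover have "A $$ (i-1,t) = 1 \<Longrightarrow> t = j + 1" using key[OF G, of i "i-1" j k t] assms h t by auto
      ultimately show "A $$ (i-1,t) = (if t = j + 1 then 1 else 0)"
        using \<open>A $$ (i-1,t0) = 1\<close> bit_cases' by metis
    qed
    have hi: "\<And>t. t < n \<Longrightarrow> A $$ (i+1,t) = (if t = j + 1 then 1 else 0)"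
    proof -
      fix t assume t: "t < n"
      have "i + 1 < n" using assms(3) h by arith
      then obtain t0 where "t0 < n" "A $$ (i+1,t0) = 1" using row_nonzero[OF G, of "i+1"] by auto
      hence "t0 = j + 1" using key[OF G, of i "i+1" j k t0] assms h by auto
      moreover have "A $$ (i+1,t) = 1 \<Longrightarrow> t = j + 1" using key[OF G, of i "i+1" j k t] assms h t by auto
      ultimately show "A $$ (i+1,t) = (if t = j + 1 then 1 else 0)"
        using \<open>A $$ (i+1,t0) = 1\<close> bit_cases' by metis
    qed
    have "i - 1 < n" "i + 1 < n" "i - 1 \<noteq> i + 1" using assms(3) h by arith+
    thus False using rows_distinct[OF G, of "i-1" "i+1"] lo hi by auto
  qed
  ultimately show ?thesis by auto
qed

end
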